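(* Let $\boldsymbol{u}^\star\in\mathbb{R}^n$ and $f(\boldsymbol{u})=\frac12\|\boldsymbol{u}\boldsymbol{u}^{\mathrm T}-\boldsymbol{u}^\star{\boldsymbol{u}^\star}^{\mathrm T}\|_1$ on $\mathbb{R}^n$. For any spurious stationary point $\boldsymbol{u}$ of $f$ and for $\boldsymbol{w}=\boldsymbol{u}^\star-\boldsymbol{u}$ as well as for $\boldsymbol{w}=-\boldsymbol{u}^\star-\boldsymbol{u}$, one has $df(\boldsymbol{u})(\boldsymbol{w})=0$.
   Context: $\|\cdot\|_1$ is the entrywise $\ell_1$-norm. $df(\boldsymbol{x})(\boldsymbol{w})=\lim_{t\searrow0}(f(\boldsymbol{x}+t\boldsymbol{w})-f(\boldsymbol{x}))/t$. A point $\boldsymbol{u}$ is stationary if $\boldsymbol{0}\in\partial f(\boldsymbol{u})$, where $\partial f(\boldsymbol{u})=\{\boldsymbol{Z}\boldsymbol{u}:\boldsymbol{Z}\text{ symmetric}, \boldsymbol{Z}\in\operatorname{Sign}(\boldsymbol{u}\boldsymbol{u}^{\mathrm T}-\boldsymbol{u}^\star{\boldsymbol{u}^\star}^{\mathrm T})\}$ (entrywise set-valued sign, $\operatorname{Sign}(0)=[-1,1]$) is the (Fréchet = limiting = Clarke) subdifferential; it is spurious if additionally $\boldsymbol{u}\notin\{\boldsymbol{u}^\star,-\boldsymbol{u}^\star\}$. *)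

theory Defs
  imports "HOL-Analysis.Analysis"
begin

definition lrobj :: "real^'n \<Rightarrow> real^'n \<Rightarrow> real" where
  "lrobj us u = (1/2) * (\<Sum>i\<in>UNIV. \<Sum>j\<in>UNIV. \<bar>u$i * u$j - us$i * us$j\<bar>)"

definition Sign :: "real \<Rightarrow> real set" where
  "Sign x = (if x = 0 then {-1..1} else {sgn x})"

definition subdiff :: "real^'n \<Rightarrow> real^'n \<Rightarrow> (real^'n) set" where
  "subdiff us u = {Z *v u | Z :: real^'n^'n. transpose Z = Z \<and>
      (\<forall>i j. Z$i$j \<in> Sign (u$i * u$j - us$i * us$j))}"

definition stationary :: "real^'n \<Rightarrow> real^'n \<Rightarrow> bool" where
  "stationary us u \<longleftrightarrow> 0 \<in> subdiff us u"

definition spurious_stationary :: "real^'n \<Rightarrow> real^'n \<Rightarrow> bool" where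
  "spurious_stationary us u \<longleftrightarrow> stationary us u \<and> u \<noteq> us \<and> u \<noteq> - us"

definition has_dir_deriv :: "(real^'n \<Rightarrow> real) \<Rightarrow> real^'n \<Rightarrow> real^'n \<Rightarrow> real \<Rightarrow> bool" where
  "has_dir_deriv f x w d \<longleftrightarrow> ((\<lambda>t. (f (x + t *\<^sub>R w) - f x) / t) \<longlongrightarrow> d) (at_right 0)"

end

theory Submission
  imports Defs
begin


lemma abs_step:
  fixes D x :: real
  assumes "D \<noteq> 0" "\<bar>x\<bar> < \<bar>D\<bar>"
  shows "\<bar>D + x\<bar> - \<bar>D\<bar> = sgn D * x"
  using assms by (cases "D > 0") (auto simp: sgn_real_def abs_if)

lemma entry_lim:
  fixes D a b :: real
  shows "((\<lambda>t. (\<bar>D + t*a + t^2*b\<bar> - \<bar>D\<bar>)/t) \<longlongrightarrow> (if D = 0 then \<bar>a\<bar> else sgn D * a)) (at_right 0)"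
proof (cases "D = 0")
  case True
  have "((\<lambda>t. \<bar>a + t*b\<bar>) \<longlongrightarrow> \<bar>a + 0*b\<bar>) (at_right 0)"
    by (intro tendsto_intros)
  hence L: "((\<lambda>t. \<bar>a + t*b\<bar>) \<longlongrightarrow> \<bar>a\<bar>) (at_right 0)" by simp
  have ev: "eventually (\<lambda>t. \<bar>a + t*b\<bar> = (\<bar>D + t*a + t^2*b\<bar> - \<bar>D\<bar>)/t) (at_right 0)"
    using eventually_at_right_less[of "0::real"]
  proof (rule eventually_mono)
    fix t :: real assume "0 < t"
    have "D + t*a + t^2*b = t * (a + t*b)" using True
      by (simp add: power2_eq_square algebra_simps)
    then have "\<bar>D + t*a + t^2*b\<bar> = t * \<bar>a + t*b\<bar>" using \<open>0 < t\<close>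
      by (simp add: abs_mult)
    then show "\<bar>a + t*b\<bar> = (\<bar>D + t*a + t^2*b\<bar> - \<bar>D\<bar>)/t" using True \<open>0 < t\<close> by simp
  qed
  show ?thesis using Lim_transform_eventually[OF L ev] True by simp
next
  case False
  have "((\<lambda>t. t*a + t^2*b) \<longlongrightarrow> 0*a + 0^2*b) (at_right (0::real))"
    by (intro tendsto_intros)
  hence "((\<lambda>t. \<bar>t*a + t^2*b\<bar>) \<longlongrightarrow> 0) (at_right (0::real))"
    using tendsto_rabs_zero_iff by fastforce
  hence e1: "eventually (\<lambda>t. \<bar>t*a + t^2*b\<bar> < \<bar>D\<bar>) (at_right 0)"
    using False by (intro order_tendstoD(2)) auto
  have L: "((\<lambda>t. sgn D * (a + t*b)) \<longlongrightarrow> sgn D * (a + 0*b)) (at_right 0)"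
    by (intro tendsto_intros)
  have ev: "eventually (\<lambda>t. sgn D * (a + t*b) = (\<bar>D + t*a + t^2*b\<bar> - \<bar>D\<bar>)/t) (at_right 0)"
    using eventually_conj[OF e1 eventually_at_right_less[of "0::real"]]
  proof (rule eventually_mono)
    fix t :: real assume h: "\<bar>t*a + t^2*b\<bar> < \<bar>D\<bar> \<and> 0 < t"
    have "\<bar>D + (t*a + t^2*b)\<bar> - \<bar>D\<bar> = sgn D * (t*a + t^2*b)"
      using abs_step[OF False] h by blast
    then have "\<bar>D + t*a + t^2*b\<bar> - \<bar>D\<bar> = t * (sgn D * (a + t*b))"
      by (simp add: power2_eq_square algebra_simps)
    then show "sgn D * (a + t*b) = (\<bar>D + t*a + t^2*b\<bar> - \<bar>D\<bar>)/t" using h by simp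
  qed
  show ?thesis using Lim_transform_eventually[OF L ev] False by simp
qed

lemma Sign_le: "z1 \<in> Sign x \<Longrightarrow> z2 \<in> Sign y \<Longrightarrow> x < y \<Longrightarrow> z1 \<le> z2"
  by (auto simp: Sign_def sgn_real_def split: if_splits)

lemma Sign_bounds: "z \<in> Sign x \<Longrightarrow> -1 \<le> z \<and> z \<le> 1"
  by (auto simp: Sign_def sgn_real_def split: if_splits)

lemma Sign_pos: "z \<in> Sign x \<Longrightarrow> x > 0 \<Longrightarrow> z = 1"
  by (auto simp: Sign_def sgn_real_def split: if_splits)

lemma Sign_neg: "z \<in> Sign x \<Longrightarrow> x < 0 \<Longrightarrow> z = -1"
  by (auto simp: Sign_def sgn_real_def split: if_splits)

lemma Sign_scale: "c > 0 \<Longrightarrow> Sign (c * x) = Sign x"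
  by (auto simp: Sign_def sgn_mult)

lemma Sign_uminus: "z \<in> Sign x \<Longrightarrow> -z \<in> Sign (-x)"
  by (auto simp: Sign_def)



lemma zero_p:
  fixes p v :: "'n::finite \<Rightarrow> real" and \<sigma> :: "'n \<Rightarrow> 'n \<Rightarrow> real"
  assumes S: "\<And>i k. \<sigma> i k \<in> Sign (v i * v k - p i * p k)"
    and R: "\<And>i. (\<Sum>k\<in>UNIV. \<sigma> i k * v k) = 0"
    and pj: "p j = 0"
  shows "v j = 0"
proof (rule ccontr)
  assume nz: "v j \<noteq> 0"
  have T: "sgn (v j) * (\<sigma> j k * v k) = \<bar>v k\<bar>" for k
  proof (cases "v k = 0")
    case True then show ?thesis by simp
  next
    case False
    have s: "\<sigma> j k \<in> Sign (v j * v k)" using S[of j k] pj by simp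
    then have "\<sigma> j k = sgn (v j * v k)" using nz False by (simp add: Sign_def)
    then show ?thesis using nz False
      by (cases "v j > 0"; cases "v k > 0") (auto simp: sgn_real_def zero_less_mult_iff mult_less_0_iff)
  qed
  have "(\<Sum>k\<in>UNIV. \<bar>v k\<bar>) = sgn (v j) * (\<Sum>k\<in>UNIV. \<sigma> j k * v k)"
    by (simp add: sum_distrib_left T)
  also have "\<dots> = 0" using R by simp
  finally have z: "(\<Sum>k\<in>UNIV. \<bar>v k\<bar>) = 0" .
  have "\<bar>v j\<bar> \<le> (\<Sum>k\<in>UNIV. \<bar>v k\<bar>)" by (rule member_le_sum) auto
  then show False using nz z by simp
qed

lemma ratio_eq:
  fixes p v :: "'n::finite \<Rightarrow> real" and \<sigma> :: "'n \<Rightarrow> 'n \<Rightarrow> real"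
  assumes Sy: "\<And>i k. \<sigma> i k = \<sigma> k i"
    and S: "\<And>i k. \<sigma> i k \<in> Sign (v i * v k - p i * p k)"
    and R: "\<And>i. (\<Sum>k\<in>UNIV. \<sigma> i k * v k) = 0"
    and P: "\<And>k. p k \<ge> 0"
    and Z0: "\<And>k. p k = 0 \<Longrightarrow> v k = 0"
    and e: "v i * v j = p i * p j" and vi: "v i \<noteq> 0" and vj: "v j \<noteq> 0"
  shows "(v i)^2 = (p i)^2"
proof (rule ccontr)
  assume ne: "(v i)^2 \<noteq> (p i)^2"
  have pi: "p i > 0" using P[of i] Z0[of i] vi by fastforce
  have pj: "p j > 0" using P[of j] Z0[of j] vj by fastforce
  define K where "K = v i * p j - v j * p i"
  have K0: "K \<noteq> 0"
  proof
    assume "K = 0"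
    then have "v i * p j = v j * p i" by (simp add: K_def)
    then have "v i * v i * p j = p i * p i * p j" using e
      by (metis mult.assoc mult.commute)
    then have "v i * v i = p i * p i" using pj by simp
    then show False using ne by (simp add: power2_eq_square)
  qed
  have trm: "0 \<le> K * ((\<sigma> i k - \<sigma> j k) * v k)" for k
  proof (cases "p k = 0")
    case True then show ?thesis using Z0 by simp
  next
    case False
    have s1: "\<sigma> i k \<in> Sign (p j * (v i * v k - p i * p k))"
      using S[of i k] Sign_scale[OF pj] by simp
    have s2: "\<sigma> j k \<in> Sign (p i * (v j * v k - p j * p k))"
      using S[of j k] Sign_scale[OF pi] by simp
    have d: "p j * (v i * v k - p i * p k) - p i * (v j * v k - p j * p k) = v k * K"
      by (simp add: K_def algebra_simps)
    consider "v k * K > 0" | "v k * K < 0" | "v k * K = 0" by linarith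
    then show ?thesis
    proof cases
      case 1
      then have "\<sigma> j k \<le> \<sigma> i k" using Sign_le[OF s2 s1] d by linarith
      then show ?thesis using 1
        by (metis diff_ge_0_iff_ge mult.commute mult.left_commute order_less_imp_le zero_le_mult_iff)
    next
      case 2
      then have "\<sigma> i k \<le> \<sigma> j k" using Sign_le[OF s1 s2] d by linarith
      then have "(\<sigma> i k - \<sigma> j k) \<le> 0" by simp
      then show ?thesis using 2
        by (metis mult.commute mult.left_commute mult_nonpos_nonpos order_less_imp_le)
    next
      case 3 then show ?thesis by auto
    qed
  qed
  have "(\<Sum>k\<in>UNIV. K * ((\<sigma> i k - \<sigma> j k) * v k))
        = K * ((\<Sum>k\<in>UNIV. \<sigma> i k * v k) - (\<Sum>k\<in>UNIV. \<sigma> j k * v k))"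
    by (simp add: sum_distrib_left sum_subtractf algebra_simps)
  also have "\<dots> = 0" using R by simp
  finally have "\<forall>k\<in>UNIV. K * ((\<sigma> i k - \<sigma> j k) * v k) = 0"
    using sum_nonneg_eq_0_iff[of UNIV "\<lambda>k. K * ((\<sigma> i k - \<sigma> j k) * v k)"] trm by auto
  then have "K * ((\<sigma> i j - \<sigma> j j) * v j) = 0" "K * ((\<sigma> i i - \<sigma> j i) * v i) = 0" by auto
  then have "\<sigma> i j = \<sigma> j j" "\<sigma> i i = \<sigma> j i" using K0 vi vj by auto
  then have eqd: "\<sigma> i i = \<sigma> j j" using Sy[of i j] by simp
  have sii: "\<sigma> i i \<in> Sign ((v i)^2 - (p i)^2)" using S[of i i] by (simp add: power2_eq_square)
  have sjj: "\<sigma> j j \<in> Sign ((v j)^2 - (p j)^2)" using S[of j j] by (simp add: power2_eq_square)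
  have prod: "(v i)^2 * (v j)^2 = (p i)^2 * (p j)^2" using e
    by (metis power_mult_distrib)
  have pi2: "(p i)^2 > 0" "(p j)^2 > 0" using pi pj by auto
  consider "(v i)^2 > (p i)^2" | "(v i)^2 < (p i)^2" using ne by linarith
  then show False
  proof cases
    case 1
    have "(v j)^2 < (p j)^2"
    proof (rule ccontr)
      assume "\<not> (v j)^2 < (p j)^2"
      then have "(p i)^2 * (p j)^2 < (v i)^2 * (v j)^2"
      proof -
        have "(p i)^2 * (p j)^2 < (v i)^2 * (p j)^2" using 1 pi2 by simp
        also have "\<dots> \<le> (v i)^2 * (v j)^2" using \<open>\<not> (v j)^2 < (p j)^2\<close>
          by (intro mult_left_mono) auto
        finally show ?thesis .
      qed 
      then show False using prod by simp
    qed
    then show False using Sign_pos[OF sii] Sign_neg[OF sjj] 1 eqd by simp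
  next
    case 2
    have "(v j)^2 > (p j)^2"
    proof (rule ccontr)
      assume "\<not> (v j)^2 > (p j)^2"
      then have "(v i)^2 * (v j)^2 < (p i)^2 * (p j)^2"
      proof -
        have "(v i)^2 * (v j)^2 \<le> (v i)^2 * (p j)^2" using \<open>\<not> (v j)^2 > (p j)^2\<close>
          by (intro mult_left_mono) auto
        also have "\<dots> < (p i)^2 * (p j)^2" using 2 pi2 by simp
        finally show ?thesis .
      qed
      then show False using prod by simp
    qed
    then show False using Sign_pos[OF sjj] Sign_neg[OF sii] 2 eqd by simp
  qed
qed



lemma E_neg:
  fixes p v :: "'n::finite \<Rightarrow> real" and \<sigma> :: "'n \<Rightarrow> 'n \<Rightarrow> real"
  assumes S: "\<And>i k. \<sigma> i k \<in> Sign (v i * v k - p i * p k)"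
    and R: "\<And>i. (\<Sum>k\<in>UNIV. \<sigma> i k * v k) = 0"
    and P: "\<And>k. p k \<ge> 0"
    and ne: "\<exists>k. v k \<noteq> p k"
    and vi: "v i = p i" and pi: "p i > 0" and vm: "v m = p m" and pm: "p m > 0"
  shows "\<sigma> i m = -1"
proof -
  define g where "g k = (if 0 < v k \<and> v k \<le> p k then - v k else \<bar>v k\<bar>)" for k
  obtain j where j: "v j < p j"
  proof (rule ccontr)
    assume "\<not> thesis"
    then have ge: "\<And>j. p j \<le> v j" using that by (meson not_le)
    obtain k where k: "v k \<noteq> p k" using ne by blast
    then have vk: "v k > p k" using ge[of k] by simp
    have T: "\<sigma> k l * v l = \<bar>v l\<bar>" for l
    proof (cases "v l = 0")
      case True then show ?thesis by simp
    next
      case False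
      then have "v l > 0" using ge[of l] P[of l] by simp
      then have "v k * v l > p k * v l" using vk by simp
      moreover have "p k * v l \<ge> p k * p l" using ge[of l] P[of k] by (simp add: mult_left_mono)
      ultimately have "\<sigma> k l = 1" using Sign_pos[OF S[of k l]] by simp
      then show ?thesis using \<open>v l > 0\<close> by simp
    qed
    have "(\<Sum>l\<in>UNIV. \<bar>v l\<bar>) = 0" using R[of k] T by simp
    moreover have "\<bar>v k\<bar> \<le> (\<Sum>l\<in>UNIV. \<bar>v l\<bar>)" by (rule member_le_sum) auto
    moreover have "v k > 0" using vk P[of k] by simp
    ultimately show False by simp
  qed
  have rowj: "\<sigma> j k * v k \<le> g k" for k
  proof (cases "0 < v k \<and> v k \<le> p k")
    case True
    have "v j * v k < p j * v k" using j True by simp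
    also have "\<dots> \<le> p j * p k" using True P[of j] j by (simp add: mult_left_mono)
    finally have "\<sigma> j k = -1" using Sign_neg[OF S[of j k]] by simp
    then show ?thesis using True by (simp add: g_def)
  next
    case False
    have "\<sigma> j k * v k \<le> \<bar>\<sigma> j k * v k\<bar>" by simp
    also have "\<dots> \<le> \<bar>v k\<bar>" using Sign_bounds[OF S[of j k]]
      by (simp add: abs_mult mult_left_le_one_le abs_le_iff)
    finally show ?thesis using False unfolding g_def by auto
  qed
  have g0: "0 \<le> (\<Sum>k\<in>UNIV. g k)"
  proof -
    have "0 = (\<Sum>k\<in>UNIV. \<sigma> j k * v k)" using R by simp
    also have "\<dots> \<le> (\<Sum>k\<in>UNIV. g k)" by (rule sum_mono) (rule rowj)
    finally show ?thesis .
  qed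
  define h where "h k = (if v k = p k \<and> p k > 0 then (\<sigma> i k + 1) * p k else 0)" for k
  have h0: "h k \<ge> 0" for k using Sign_bounds[OF S[of i k]] by (simp add: h_def)
  have rowi: "\<sigma> i k * v k = g k + h k" for k
  proof -
    have s: "\<sigma> i k \<in> Sign (v k - p k)"
      using S[of i k] Sign_scale[OF pi, of "v k - p k"] vi by (simp add: algebra_simps)
    consider "v k = p k \<and> p k > 0" | "v k = p k \<and> p k = 0" | "v k > p k" | "v k < p k"
      using P[of k] by linarith
    then show ?thesis
    proof cases
      case 1 then show ?thesis by (simp add: g_def h_def algebra_simps)
    next
      case 2 then show ?thesis by (simp add: g_def h_def)
    next
      case 3
      then have "\<sigma> i k = 1" using Sign_pos[OF s] by simp
      then show ?thesis using 3 P[of k] by (simp add: g_def h_def)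
    next
      case 4
      then have "\<sigma> i k = -1" using Sign_neg[OF s] by simp
      then show ?thesis using 4 P[of k] by (auto simp: g_def h_def)
    qed
  qed
  have "0 = (\<Sum>k\<in>UNIV. g k) + (\<Sum>k\<in>UNIV. h k)"
    using R[of i] by (simp add: rowi sum.distrib)
  then have hs: "(\<Sum>k\<in>UNIV. h k) = 0" proof -
    have "0 \<le> (\<Sum>k\<in>UNIV. h k)" using h0 by (simp add: sum_nonneg)
    then show ?thesis using g0 \<open>0 = _\<close> by linarith
  qed
  then have "h m = 0" using sum_nonneg_eq_0_iff[of UNIV h] h0 by auto
  then show ?thesis using vm pm by (simp add: h_def)
qed



lemma dir_general:
  fixes us u w :: "real^'n" and Z :: "real^'n^'n"
  assumes sym: "\<And>i j. Z$i$j = Z$j$i"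
    and sg: "\<And>i j. Z$i$j \<in> Sign (u$i*u$j - us$i*us$j)"
    and zu: "\<And>i. (\<Sum>j\<in>UNIV. Z$i$j * u$j) = 0"
    and cond: "\<And>i j. u$i*u$j - us$i*us$j = 0 \<Longrightarrow>
        Z$i$j * (u$i*w$j + w$i*u$j) = \<bar>u$i*w$j + w$i*u$j\<bar>"
  shows "has_dir_deriv (lrobj us) u w 0"
proof -
  define D where "D i j = u$i*u$j - us$i*us$j" for i j
  define a where "a i j = u$i*w$j + w$i*u$j" for i j
  define b where "b i j = w$i*w$j" for i j
  have val: "lrobj us (u + t *\<^sub>R w) = (1/2) * (\<Sum>i\<in>UNIV. \<Sum>j\<in>UNIV. \<bar>D i j + t * a i j + t^2 * b i j\<bar>)" for t
    unfolding lrobj_def D_def a_def b_def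
    by (simp add: algebra_simps power2_eq_square)
  have val0: "lrobj us u = (1/2) * (\<Sum>i\<in>UNIV. \<Sum>j\<in>UNIV. \<bar>D i j\<bar>)"
    unfolding lrobj_def D_def by simp
  have eq: "(lrobj us (u + t *\<^sub>R w) - lrobj us u) / t
      = (1/2) * (\<Sum>i\<in>UNIV. \<Sum>j\<in>UNIV. (\<bar>D i j + t * a i j + t^2 * b i j\<bar> - \<bar>D i j\<bar>) / t)" for t
  proof -
    have "(\<Sum>i\<in>UNIV. \<Sum>j\<in>UNIV. (\<bar>D i j + t * a i j + t^2 * b i j\<bar> - \<bar>D i j\<bar>) / t)
       = ((\<Sum>i\<in>UNIV. \<Sum>j\<in>UNIV. \<bar>D i j + t * a i j + t^2 * b i j\<bar>) - (\<Sum>i\<in>UNIV. \<Sum>j\<in>UNIV. \<bar>D i j\<bar>)) / t"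
      by (simp add: sum_divide_distrib sum_subtractf diff_divide_distrib)
    then show ?thesis unfolding val val0 by (simp add: field_simps)
  qed
  have lim: "((\<lambda>t. (1/2) * (\<Sum>i\<in>UNIV. \<Sum>j\<in>UNIV. (\<bar>D i j + t * a i j + t^2 * b i j\<bar> - \<bar>D i j\<bar>) / t))
      \<longlongrightarrow> (1/2) * (\<Sum>i\<in>UNIV. \<Sum>j\<in>UNIV. (if D i j = 0 then \<bar>a i j\<bar> else sgn (D i j) * a i j))) (at_right 0)"
    by (intro tendsto_mult_left tendsto_sum entry_lim)
  have pt: "(if D i j = 0 then \<bar>a i j\<bar> else sgn (D i j) * a i j) = Z$i$j * a i j" for i j
  proof (cases "D i j = 0")
    case True then show ?thesis using cond[of i j] by (simp add: D_def a_def)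
  next
    case False
    then have "Z$i$j = sgn (D i j)" using sg[of i j] by (simp add: D_def Sign_def)
    then show ?thesis using False by simp
  qed
  have s1: "(\<Sum>i\<in>UNIV. \<Sum>j\<in>UNIV. Z$i$j * (w$i*u$j)) = 0"
  proof -
    have "(\<Sum>i\<in>UNIV. \<Sum>j\<in>UNIV. Z$i$j * (w$i*u$j)) = (\<Sum>i\<in>UNIV. w$i * (\<Sum>j\<in>UNIV. Z$i$j * u$j))"
      by (simp add: sum_distrib_left algebra_simps)
    also have "\<dots> = 0" using zu by simp
    finally show ?thesis .
  qed
  have s2: "(\<Sum>i\<in>UNIV. \<Sum>j\<in>UNIV. Z$i$j * (u$i*w$j)) = 0"
  proof -
    have "(\<Sum>i\<in>UNIV. \<Sum>j\<in>UNIV. Z$i$j * (u$i*w$j)) = (\<Sum>j\<in>UNIV. \<Sum>i\<in>UNIV. Z$j$i * (w$j*u$i))"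
      by (subst sum.swap) (simp add: sym algebra_simps)
    also have "\<dots> = 0" using s1 .
    finally show ?thesis .
  qed
  have tot: "(\<Sum>i\<in>UNIV. \<Sum>j\<in>UNIV. (if D i j = 0 then \<bar>a i j\<bar> else sgn (D i j) * a i j)) = 0"
    using s1 s2 by (simp add: pt a_def distrib_left sum.distrib)
  show ?thesis
    unfolding has_dir_deriv_def eq using lim tot by simp
qed



lemma sgn_self: "sgn (x::real) * x = \<bar>x\<bar>"
  by (simp add: sgn_real_def)

lemma sgn_sq: "(x::real) \<noteq> 0 \<Longrightarrow> sgn x * sgn x = 1"
  by (simp add: sgn_real_def)

lemma sgn3: "sgn (x::real) = 1 \<or> sgn x = -1 \<or> sgn x = 0"
  by (simp add: sgn_real_def)

lemma sgn4: "- (sgn (x::real) * sgn y) * (-4 * (x * y)) = \<bar>-4 * (x * y)\<bar>"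
proof -
  have "- (sgn x * sgn y) * (-4 * (x * y)) = 4 * ((sgn x * x) * (sgn y * y))"
    by (simp add: algebra_simps)
  then show ?thesis by (simp add: sgn_self abs_mult)
qed

theorem lemma2:
  fixes us u :: "real^'n"
  assumes "spurious_stationary us u"
  shows "has_dir_deriv (lrobj us) u (us - u) 0 \<and> has_dir_deriv (lrobj us) u (- us - u) 0"
proof -
  from assms obtain Z :: "real^'n^'n" where Z0: "0 = Z *v u" and Zt: "transpose Z = Z"
    and sg: "\<And>i j. Z$i$j \<in> Sign (u$i*u$j - us$i*us$j)"
    and nus: "u \<noteq> us" and nmus: "u \<noteq> - us"
    unfolding spurious_stationary_def stationary_def subdiff_def by blast
  have sym: "Z$i$j = Z$j$i" for i j
  proof -
    have "(transpose Z)$i$j = Z$j$i" by (simp add: transpose_def)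
    then show ?thesis using Zt by simp
  qed
  have zu: "(\<Sum>j\<in>UNIV. Z$i$j * u$j) = 0" for i
  proof -
    have "(Z *v u)$i = 0" using Z0 by simp
    then show ?thesis by (simp add: matrix_vector_mult_def)
  qed
  have A: "us$k = 0 \<Longrightarrow> u$k = 0" for k
    using zero_p[of "\<lambda>i k. Z$i$k" "\<lambda>k. u$k" "\<lambda>k. us$k" k] sg zu by blast
  define p where "p k = \<bar>us$k\<bar>" for k
  define v where "v k = sgn (us$k) * u$k" for k
  define \<sigma> where "\<sigma> i k = Z$i$k * sgn (us$i) * sgn (us$k)" for i k
  have Sy: "\<sigma> i k = \<sigma> k i" for i k using sym[of i k] by (simp add: \<sigma>_def)
  have S: "\<sigma> i k \<in> Sign (v i * v k - p i * p k)" for i k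
  proof -
    have e: "v i * v k - p i * p k = (sgn (us$i) * sgn (us$k)) * (u$i*u$k - us$i*us$k)"
      unfolding v_def p_def by (simp add: algebra_simps flip: sgn_self)
    have s: "Z$i$k \<in> Sign (u$i*u$k - us$i*us$k)" by (rule sg)
    consider "sgn (us$i) * sgn (us$k) = 1" | "sgn (us$i) * sgn (us$k) = -1" | "sgn (us$i) * sgn (us$k) = 0"
    proof -
      have "sgn (us$i) * sgn (us$k) = 1 \<or> sgn (us$i) * sgn (us$k) = -1 \<or> sgn (us$i) * sgn (us$k) = 0"
        using sgn3[of "us$i"] sgn3[of "us$k"] by (elim disjE) simp_all
      then show thesis using that by blast
    qed
    then show ?thesis
    proof cases
      case 1 then show ?thesis using s e by (simp add: \<sigma>_def mult.assoc)
    next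
      case 2 then show ?thesis using Sign_uminus[OF s] e by (simp add: \<sigma>_def mult.assoc)
    next
      case 3
      then have "\<sigma> i k = 0" "v i * v k - p i * p k = 0" using e by (auto simp: \<sigma>_def)
      then show ?thesis by (simp add: Sign_def)
    qed
  qed
  have R: "(\<Sum>k\<in>UNIV. \<sigma> i k * v k) = 0" for i
  proof -
    have "\<sigma> i k * v k = sgn (us$i) * (Z$i$k * u$k)" for k
    proof (cases "us$k = 0")
      case True then show ?thesis using A[of k] by (simp add: \<sigma>_def v_def)
    next
      case False
      then have "sgn (us$k) * sgn (us$k) = 1" by (rule sgn_sq)
      have "\<sigma> i k * v k = Z$i$k * sgn (us$i) * (sgn (us$k) * sgn (us$k)) * u$k"
        unfolding \<sigma>_def v_def by (simp only: mult_ac)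
      also have "\<dots> = sgn (us$i) * (Z$i$k * u$k)" using \<open>sgn (us$k) * sgn (us$k) = 1\<close>
        by (simp only: mult_1_right mult_ac)
      finally show ?thesis .
    qed
    then have "(\<Sum>k\<in>UNIV. \<sigma> i k * v k) = sgn (us$i) * (\<Sum>k\<in>UNIV. Z$i$k * u$k)"
      by (simp add: sum_distrib_left)
    then show ?thesis using zu by simp
  qed
  have P: "p k \<ge> 0" for k by (simp add: p_def)
  have Z0': "p k = 0 \<Longrightarrow> v k = 0" for k using A[of k] by (simp add: p_def v_def)
  have Sm: "\<sigma> i k \<in> Sign ((- v i) * (- v k) - p i * p k)" for i k using S by simp
  have Rm: "(\<Sum>k\<in>UNIV. \<sigma> i k * (- v k)) = 0" for i using R[of i]
    by (simp add: sum_negf)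
  have vp: "v k = p k \<longleftrightarrow> u$k = us$k" for k
  proof -
    consider "us$k = 0" | "us$k > 0" | "us$k < 0" by linarith
    then show ?thesis
    proof cases
      case 1 then show ?thesis using A[of k] by (simp add: v_def p_def)
    next
      case 2 then show ?thesis by (auto simp: v_def p_def)
    next
      case 3 then show ?thesis by (auto simp: v_def p_def)
    qed
  qed
  have vmp: "- v k = p k \<longleftrightarrow> u$k = - us$k" for k
  proof -
    consider "us$k = 0" | "us$k > 0" | "us$k < 0" by linarith
    then show ?thesis
    proof cases
      case 1 then show ?thesis using A[of k] by (simp add: v_def p_def)
    next
      case 2 then show ?thesis by (auto simp: v_def p_def)
    next
      case 3 then show ?thesis by (auto simp: v_def p_def)
    qed
  qed
  have ne1: "\<exists>k. v k \<noteq> p k" using nus vp by (auto simp: vec_eq_iff)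
  have ne2: "\<exists>k. - v k \<noteq> p k" using nmus vmp by (auto simp: vec_eq_iff)
  have key: "(u$i*us$j = 0 \<and> us$i*u$j = 0 \<and> u$i*u$j = 0)
     \<or> (u$i = us$i \<and> u$j = us$j \<and> Z$i$j = - (sgn (us$i) * sgn (us$j)))
     \<or> (u$i = - us$i \<and> u$j = - us$j \<and> Z$i$j = - (sgn (us$i) * sgn (us$j)))"
    if D0: "u$i*u$j - us$i*us$j = 0" for i j
  proof (cases "u$i = 0 \<or> u$j = 0")
    case True
    then have "us$i*us$j = 0" using D0 by auto
    then show ?thesis using True A[of i] A[of j] by auto
  next
    case False
    then have ui: "u$i \<noteq> 0" and uj: "u$j \<noteq> 0" by auto
    have si: "us$i \<noteq> 0" and sj: "us$j \<noteq> 0" using A ui uj by blast+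
    have vi: "v i \<noteq> 0" and vj: "v j \<noteq> 0" using ui uj si sj by (simp_all add: v_def sgn_real_def)
    have e: "v i * v j = p i * p j"
      unfolding v_def p_def using D0 by (simp add: algebra_simps flip: sgn_self)
    have e': "v j * v i = p j * p i" using e by (simp add: mult.commute)
    have q1: "(v i)^2 = (p i)^2" by (rule ratio_eq[OF Sy S R P Z0' e vi vj])
    have q2: "(v j)^2 = (p j)^2" by (rule ratio_eq[OF Sy S R P Z0' e' vj vi])
    have pi: "p i > 0" and pj: "p j > 0" using si sj by (auto simp: p_def)
    have Zs: "Z$i$j = \<sigma> i j * sgn (us$i) * sgn (us$j)"
      using sgn_sq[OF si] sgn_sq[OF sj] unfolding \<sigma>_def
      by (metis (no_types, lifting) mult.assoc mult.commute mult_1)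
    have "(v i = p i \<and> v j = p j) \<or> (v i = - p i \<and> v j = - p j)"
    proof -
      have "v i = p i \<or> v i = - p i" using q1 by (simp add: power2_eq_iff)
      moreover have "v j = p j \<or> v j = - p j" using q2 by (simp add: power2_eq_iff)
      moreover have "p i * p j > 0" using pi pj by simp
      ultimately show ?thesis using e by auto
    qed
    then show ?thesis
    proof
      assume h: "v i = p i \<and> v j = p j"
      have "\<sigma> i j = -1" using E_neg[OF S R P ne1, of i j] h pi pj by blast
      then show ?thesis using h vp Zs by simp
    next
      assume h: "v i = - p i \<and> v j = - p j"
      have "\<sigma> i j = -1" using E_neg[OF Sm Rm P ne2, of i j] h pi pj by simp
      moreover have "u$i = - us$i" "u$j = - us$j" using h vmp[of i] vmp[of j] by simp_all
      ultimately show ?thesis using Zs by simp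
    qed
  qed
  have c1: "Z$i$j * (u$i*(us - u)$j + (us - u)$i*u$j) = \<bar>u$i*(us - u)$j + (us - u)$i*u$j\<bar>"
    if "u$i*u$j - us$i*us$j = 0" for i j
    using key[OF that]
  proof (elim disjE)
    assume h0: "u$i*us$j = 0 \<and> us$i*u$j = 0 \<and> u$i*u$j = 0"
    have "u$i*(us - u)$j + (us - u)$i*u$j = u$i*us$j + us$i*u$j - 2*(u$i*u$j)"
      by (simp add: algebra_simps)
    then show ?thesis using h0 by simp
  next
    assume "u$i = us$i \<and> u$j = us$j \<and> Z$i$j = - (sgn (us$i) * sgn (us$j))"
    then show ?thesis by (simp add: algebra_simps)
  next
    assume h: "u$i = - us$i \<and> u$j = - us$j \<and> Z$i$j = - (sgn (us$i) * sgn (us$j))"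
    have "u$i*(us - u)$j + (us - u)$i*u$j = -4 * (us$i * us$j)" using h by simp
    moreover have "- (sgn (us$i) * sgn (us$j)) * (-4 * (us$i * us$j)) = \<bar>-4 * (us$i * us$j)\<bar>"
      by (rule sgn4)
    ultimately show ?thesis using h by simp
  qed
  have c2: "Z$i$j * (u$i*(- us - u)$j + (- us - u)$i*u$j) = \<bar>u$i*(- us - u)$j + (- us - u)$i*u$j\<bar>"
    if "u$i*u$j - us$i*us$j = 0" for i j
    using key[OF that]
  proof (elim disjE)
    assume h0: "u$i*us$j = 0 \<and> us$i*u$j = 0 \<and> u$i*u$j = 0"
    have "u$i*(- us - u)$j + (- us - u)$i*u$j = - (u$i*us$j) - us$i*u$j - 2*(u$i*u$j)"
      by (simp add: algebra_simps)
    then show ?thesis using h0 by simp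
  next
    assume h: "u$i = us$i \<and> u$j = us$j \<and> Z$i$j = - (sgn (us$i) * sgn (us$j))"
    have "u$i*(- us - u)$j + (- us - u)$i*u$j = -4 * (us$i * us$j)" using h by simp
    moreover have "- (sgn (us$i) * sgn (us$j)) * (-4 * (us$i * us$j)) = \<bar>-4 * (us$i * us$j)\<bar>"
      by (rule sgn4)
    ultimately show ?thesis using h by simp
  next
    assume "u$i = - us$i \<and> u$j = - us$j \<and> Z$i$j = - (sgn (us$i) * sgn (us$j))"
    then show ?thesis by (simp add: algebra_simps)
  qed
  show ?thesis
    using dir_general[OF sym sg zu c1] dir_general[OF sym sg zu c2] by blast
qed

end
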